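(* In the setting described in the context, fix $x^*\in X^*$ and $x\in\mathrm{dom}\,\Psi$, and let $R=\|x-x^*\|_L$. Then $$H(x,T(x))-F^*\leq\begin{cases}\left(1-\frac{F(x)-F^*}{2R^2}\right)(F(x)-F^* ), & \text{if } F(x)-F^*\leq R^2,\\ \frac12R^2<\frac12(F(x)-F^* ), & \text{otherwise.}\end{cases}$$
   Context: Let $U\in\mathbf{R}^{N\times N}$ be a column permutation of the $N\times N$ identity matrix, partitioned as $U=[U_1,\dots,U_n]$ with $U_i\in\mathbf{R}^{N\times N_i}$, $\sum_i N_i=N$. For $x\in\mathbf{R}^N$ write $x^{(i)}=U_i^Tx$, so $x=\sum_iU_ix^{(i)}$. Each $\mathbf{R}^{N_i}$ carries the norm $\|t\|_{(i)}=\langle B_it,t\rangle^{1/2}$ and dual norm $\|t\|_{(i)}^*=\langle B_i^{-1}t,t\rangle^{1/2}$ with $B_i$ positive definite. Consider minimizing $F(x)=f(x)+\Psi(x)$ over $\mathbf{R}^N$, where $f$ is convex and differentiable with $\|\nabla_if(x+U_it)-\nabla_if(x)\|_{(i)}^*\leq L_i\|t\|_{(i)}$ for all $x,t,i$ (constants $L_i>0$, $\nabla_if(x)=U_i^T\nabla f(x)$), and $\Psi(x)=\sum_i\Psi_i(x^{(i)})$ with each $\Psi_i$ proper closed convex. The problem has a minimizer; $F^*$ is the optimal value and $X^*$ the set of minimizers. Let $\|x\|_L=(\sum_iL_i\|x^{(i)}\|_{(i)}^2)^{1/2}$. Define $V_i(x,t)=\langle\nabla_if(x),t\rangle+\frac{L_i}{2}\|t\|_{(i)}^2+\Psi_i(x^{(i)}+t)$,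 $T^{(i)}(x)=\arg\min_tV_i(x,t)$, $T(x)=\sum_iU_iT^{(i)}(x)$, and $H(x,T)=f(x)+\langle\nabla f(x),T\rangle+\frac12\|T\|_L^2+\Psi(x+T)$. *)

theory Defs
  imports "HOL-Analysis.Analysis"
begin

text \<open>Block spaces R^{N_i} are represented by functions nat => real vanishing at indices >= N_i.\<close>

definition bvec :: "nat \<Rightarrow> (nat \<Rightarrow> real) set" where
  "bvec m = {t. \<forall>j\<ge>m. t j = 0}"

definition qf :: "nat \<Rightarrow> (nat \<Rightarrow> nat \<Rightarrow> real) \<Rightarrow> (nat \<Rightarrow> real) \<Rightarrow> real" where
  "qf m B t = (\<Sum>j<m. \<Sum>k<m. B j k * t k * t j)"

definition pos_def_mat :: "nat \<Rightarrow> (nat \<Rightarrow> nat \<Rightarrow> real) \<Rightarrow> bool" where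
  "pos_def_mat m B \<longleftrightarrow> (\<forall>j<m. \<forall>k<m. B j k = B k j) \<and>
     (\<forall>t\<in>bvec m. t \<noteq> (\<lambda>_. 0) \<longrightarrow> qf m B t > 0)"

definition matinv :: "nat \<Rightarrow> (nat \<Rightarrow> nat \<Rightarrow> real) \<Rightarrow> (nat \<Rightarrow> nat \<Rightarrow> real)" where
  "matinv m B = (THE M. (\<forall>j<m. \<forall>l<m. (\<Sum>k<m. B j k * M k l) = (if j = l then 1 else 0))
       \<and> (\<forall>j k. (m \<le> j \<or> m \<le> k) \<longrightarrow> M j k = 0))"

definition bnorm :: "nat \<Rightarrow> (nat \<Rightarrow> nat \<Rightarrow> real) \<Rightarrow> (nat \<Rightarrow> real) \<Rightarrow> real" where
  "bnorm m B t = sqrt (qf m B t)"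

definition dnorm :: "nat \<Rightarrow> (nat \<Rightarrow> nat \<Rightarrow> real) \<Rightarrow> (nat \<Rightarrow> real) \<Rightarrow> real" where
  "dnorm m B t = sqrt (qf m (matinv m B) t)"

definition col_perm :: "real^'n^'n \<Rightarrow> bool" where
  "col_perm U \<longleftrightarrow> (\<exists>\<sigma>. bij \<sigma> \<and> U = (\<chi> k l. if k = \<sigma> l then 1 else 0))"

text \<open>Column j of U_i is column e(i,j) of U. x^(i) = U_i^T x, and U_i t.\<close>
definition blk :: "real^'n^'n \<Rightarrow> (nat \<times> nat \<Rightarrow> 'n) \<Rightarrow> (nat \<Rightarrow> nat) \<Rightarrow> nat \<Rightarrow> real^'n \<Rightarrow> (nat \<Rightarrow> real)" where
  "blk U e N i x = (\<lambda>j. if j < N i then (transpose U *v x) $ e (i, j) else 0)"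

definition emb :: "real^'n^'n \<Rightarrow> (nat \<times> nat \<Rightarrow> 'n) \<Rightarrow> (nat \<Rightarrow> nat) \<Rightarrow> nat \<Rightarrow> (nat \<Rightarrow> real) \<Rightarrow> real^'n" where
  "emb U e N i t = (\<chi> k. \<Sum>j<N i. U $ k $ e (i, j) * t j)"

definition grad :: "(real^'n \<Rightarrow> real) \<Rightarrow> real^'n \<Rightarrow> real^'n" where
  "grad f x = (SOME g. (f has_derivative (\<lambda>h. g \<bullet> h)) (at x))"

definition Psi :: "nat \<Rightarrow> (nat \<Rightarrow> (nat \<Rightarrow> real) \<Rightarrow> ereal) \<Rightarrow> real^'n^'n \<Rightarrow> (nat \<times> nat \<Rightarrow> 'n)
    \<Rightarrow> (nat \<Rightarrow> nat) \<Rightarrow> real^'n \<Rightarrow> ereal" where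
  "Psi n Ps U e N x = (\<Sum>i<n. Ps i (blk U e N i x))"

definition Fobj :: "(real^'n \<Rightarrow> real) \<Rightarrow> nat \<Rightarrow> (nat \<Rightarrow> (nat \<Rightarrow> real) \<Rightarrow> ereal) \<Rightarrow> real^'n^'n
    \<Rightarrow> (nat \<times> nat \<Rightarrow> 'n) \<Rightarrow> (nat \<Rightarrow> nat) \<Rightarrow> real^'n \<Rightarrow> ereal" where
  "Fobj f n Ps U e N x = ereal (f x) + Psi n Ps U e N x"

definition Lnorm :: "nat \<Rightarrow> (nat \<Rightarrow> real) \<Rightarrow> (nat \<Rightarrow> nat \<Rightarrow> nat \<Rightarrow> real) \<Rightarrow> real^'n^'n
    \<Rightarrow> (nat \<times> nat \<Rightarrow> 'n) \<Rightarrow> (nat \<Rightarrow> nat) \<Rightarrow> real^'n \<Rightarrow> real" where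
  "Lnorm n L B U e N x = sqrt (\<Sum>i<n. L i * (bnorm (N i) (B i) (blk U e N i x))\<^sup>2)"

definition Vfun :: "(real^'n \<Rightarrow> real) \<Rightarrow> (nat \<Rightarrow> (nat \<Rightarrow> real) \<Rightarrow> ereal) \<Rightarrow> (nat \<Rightarrow> real)
    \<Rightarrow> (nat \<Rightarrow> nat \<Rightarrow> nat \<Rightarrow> real) \<Rightarrow> real^'n^'n \<Rightarrow> (nat \<times> nat \<Rightarrow> 'n) \<Rightarrow> (nat \<Rightarrow> nat)
    \<Rightarrow> nat \<Rightarrow> real^'n \<Rightarrow> (nat \<Rightarrow> real) \<Rightarrow> ereal" where
  "Vfun f Ps L B U e N i x t =
     ereal ((\<Sum>j<N i. blk U e N i (grad f x) j * t j) + L i / 2 * (bnorm (N i) (B i) t)\<^sup>2)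
     + Ps i (\<lambda>j. blk U e N i x j + t j)"

definition Tblk where
  "Tblk f Ps L B U e N i x = (THE t. t \<in> bvec (N i) \<and>
      (\<forall>s\<in>bvec (N i). Vfun f Ps L B U e N i x t \<le> Vfun f Ps L B U e N i x s))"

definition Tmap where
  "Tmap n f Ps L B U e N x = (\<Sum>i<n. emb U e N i (Tblk f Ps L B U e N i x))"

definition Hfun where
  "Hfun n f Ps L B U e N x T =
     ereal (f x + grad f x \<bullet> T + 1/2 * (Lnorm n L B U e N T)\<^sup>2) + Psi n Ps U e N (x + T)"

definition proper_closed_convex :: "nat \<Rightarrow> ((nat \<Rightarrow> real) \<Rightarrow> ereal) \<Rightarrow> bool" where
  "proper_closed_convex m g \<longleftrightarrow>
     (\<exists>t\<in>bvec m. g t < \<infinity>) \<and> (\<forall>t\<in>bvec m. g t > -\<infinity>) \<and>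
     closed {(t, r::real). t \<in> bvec m \<and> g t \<le> ereal r} \<and>
     (\<forall>t\<in>bvec m. \<forall>s\<in>bvec m. \<forall>a::real. 0 \<le> a \<and> a \<le> 1 \<longrightarrow>
        g (\<lambda>j. a * t j + (1 - a) * s j) \<le> ereal a * g t + ereal (1 - a) * g s)"

end

theory Submission imports Defs begin
lemma lsc_min:
  fixes W :: "'a::topological_space \<Rightarrow> ereal"
  assumes K: "compact K" "K \<noteq> {}" and cl: "\<And>c. closed {y\<in>K. W y \<le> ereal c}"
  shows "\<exists>y\<in>K. \<forall>z\<in>K. W y \<le> W z"
proof -
  define \<mu> where "\<mu> = (INF y\<in>K. W y)"
  show ?thesis
  proof (cases "\<mu> = \<infinity>")
    case True
    have "W z = \<infinity>" if "z \<in> K" for z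
      using INF_lower[OF that, of W] True unfolding \<mu>_def by simp
    then show ?thesis using K(2) by auto
  next
    case False
    have "K \<inter> (\<Inter>c\<in>{c. \<mu> < ereal c}. {y\<in>K. W y \<le> ereal c}) \<noteq> {}"
    proof (rule compact_imp_fip_image[OF K(1)])
      fix c show "closed {y\<in>K. W y \<le> ereal c}" by (rule cl)
    next
      fix I' assume I': "finite I'" "I' \<subseteq> {c. \<mu> < ereal c}"
      show "K \<inter> (\<Inter>c\<in>I'. {y\<in>K. W y \<le> ereal c}) \<noteq> {}"
      proof (cases "I' = {}")
        case True then show ?thesis using K(2) by simp
      next
        case False
        have "Min I' \<in> I'" using I' False by simp
        then have "\<mu> < ereal (Min I')" using I' by auto
        then obtain y where y: "y \<in> K" "W y < ereal (Min I')" unfolding \<mu>_def by (auto simp: INF_less_iff)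
        have "W y \<le> ereal c" if "c \<in> I'" for c
        proof -
          have "Min I' \<le> c" using I' that by simp
          then show ?thesis using y(2) by (meson ereal_less_eq(3) less_imp_le order_trans)
        qed
        then show ?thesis using y(1) by blast
      qed
    qed
    then obtain y where y: "y \<in> K" "\<And>c. \<mu> < ereal c \<Longrightarrow> W y \<le> ereal c" by auto
    have "W y \<le> \<mu>"
    proof (rule ccontr)
      assume "\<not> W y \<le> \<mu>" then have "\<mu> < W y" by simp
      then obtain c where "\<mu> < ereal c" "ereal c < W y" using ereal_dense2 by blast
      with y show False by force
    qed
    then show ?thesis using y(1) unfolding \<mu>_def by (meson INF_lower order_trans)
  qed
qed

lemma gen_min:
  fixes W P :: "'a::euclidean_space \<Rightarrow> ereal" and l Q :: "'a \<Rightarrow> real" and S :: "'a set" and c :: real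
  assumes S: "subspace S" "closed S"
    and l: "linear l"
    and Qhom: "\<And>a y. Q (a *\<^sub>R y) = a^2 * Q y"
    and Qlow: "\<And>y. y \<in> S \<Longrightarrow> c * (norm y)^2 \<le> Q y" and c: "c > 0"
    and Pfin: "\<And>y. y \<in> S \<Longrightarrow> P y > -\<infinity>" and P0: "P 0 < \<infinity>"
    and Pconv: "\<And>y a. y \<in> S \<Longrightarrow> 0 \<le> a \<Longrightarrow> a \<le> 1 \<Longrightarrow> P (a *\<^sub>R y) \<le> ereal a * P y + ereal (1 - a) * P 0"
    and W: "\<And>y. W y = ereal (l y + Q y) + P y"
    and cl: "\<And>r. closed {y \<in> S. W y \<le> ereal r}"
  shows "\<exists>y\<in>S. \<forall>z\<in>S. W y \<le> W z"
proof -
  have minK: "\<exists>y\<in>S \<inter> cball 0 r. \<forall>z\<in>S \<inter> cball 0 r. W y \<le> W z" if "r \<ge> 0" for r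
  proof (rule lsc_min)
    show "compact (S \<inter> cball 0 r)" using S(2) by (simp add: closed_Int_compact)
    show "S \<inter> cball 0 r \<noteq> {}" using that subspace_0[OF S(1)] by auto
    fix r'
    have "{y \<in> S \<inter> cball 0 r. W y \<le> ereal r'} = {y \<in> S. W y \<le> ereal r'} \<inter> cball 0 r" by auto
    then show "closed {y \<in> S \<inter> cball 0 r. W y \<le> ereal r'}" using cl by (simp add: closed_Int)
  qed
  have Q0: "Q 0 = 0" using Qhom[of 0 0] by simp
  have l0: "l 0 = 0" using l by (simp add: linear_0)
  have W0: "W 0 = P 0" using W[of 0] Q0 l0 by (simp add: zero_ereal_def)
  have S0: "0 \<in> S" using subspace_0[OF S(1)] .
  obtain p0 where p0: "P 0 = ereal p0" using P0 Pfin[OF S0] by (cases "P 0") auto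
  obtain y1 where y1: "y1 \<in> S \<inter> cball 0 1" "\<And>z. z \<in> S \<inter> cball 0 1 \<Longrightarrow> W y1 \<le> W z"
    using minK[of 1] by auto
  have "W y1 \<le> W 0" using y1(2)[of 0] S0 by simp
  moreover have "W y1 > -\<infinity>" using W[of y1] Pfin[of y1] y1(1) by (cases "P y1") auto
  ultimately obtain m1 where m1: "W y1 = ereal m1" using W0 p0 by (cases "W y1") auto
  have growth: "ereal (c * norm y * (norm y - 1) + norm y * m1 - (norm y - 1) * p0) \<le> W y"
    if y: "y \<in> S" "norm y \<ge> 1" for y
  proof (cases "P y = \<infinity>")
    case True then show ?thesis using W[of y] by simp
  next
    case False
    then obtain py where py: "P y = ereal py" using Pfin[OF y(1)] by (cases "P y") auto
    define s where "s = norm y"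
    have s1: "s \<ge> 1" using y s_def by simp
    define u where "u = (1/s) *\<^sub>R y"
    have uS: "u \<in> S" unfolding u_def using S(1) y(1) by (simp add: subspace_scale)
    have "norm u = (1/s) * norm y" unfolding u_def using s1 by simp
    moreover have "y \<noteq> 0" using y(2) by auto
    ultimately have "norm u = 1" using s1 s_def by simp
    then have "W u \<ge> ereal m1" using y1(2)[of u] uS m1 by simp
    have "P u \<le> ereal (1/s) * P y + ereal (1 - 1/s) * P 0"
      unfolding u_def by (rule Pconv) (use y(1) s1 in auto)
    also have "\<dots> = ereal (py / s + (1 - 1/s) * p0)" using py p0 by simp
    finally have Pu: "P u \<le> ereal (py / s + (1 - 1/s) * p0)" .
    obtain pu where pu: "P u = ereal pu" using Pu Pfin[OF uS] by (cases "P u") auto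
    have lu: "l u = l y / s" unfolding u_def using l by (simp add: linear_scale)
    have Qu: "Q u = Q y / s^2" unfolding u_def using Qhom by (simp add: power_divide)
    have h1: "l y / s + Q y / s^2 + pu \<ge> m1" using \<open>W u \<ge> ereal m1\<close> W[of u] pu lu Qu by simp
    have h2: "pu \<le> py / s + (1 - 1/s) * p0" using Pu pu by simp
    have h3: "Q y \<ge> c * s^2" using Qlow[OF y(1)] s_def by simp
    have s0: "s > 0" using s1 by simp
    have "s * (l y / s + Q y / s^2 + pu) \<ge> s * m1" using h1 s0 by (simp add: mult_left_mono)
    then have h4: "l y + Q y / s + s * pu \<ge> s * m1" using s0 by (simp add: algebra_simps power2_eq_square)
    have h5: "s * pu \<le> py + (s - 1) * p0" using mult_left_mono[OF h2, of s] s0 by (simp add: algebra_simps)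
    have h6: "Q y * (1 - 1/s) \<ge> c * s^2 * (1 - 1/s)" using h3 s1 by (intro mult_right_mono) (auto simp: field_simps)
    have h7: "c * s^2 * (1 - 1/s) = c * s * (s - 1)" using s0 by (simp add: field_simps power2_eq_square)
    have h8: "Q y = Q y / s + Q y * (1 - 1/s)" using s0 by (simp add: field_simps)
    have "c * s * (s - 1) + s * m1 - (s - 1) * p0 \<le> l y + Q y + py"
      using h4 h5 h6 h7 h8 by linarith
    then show ?thesis using W[of y] py s_def by simp
  qed
  define A where "A = m1 - c - p0"
  define s0 where "s0 = max 1 ((\<bar>A\<bar> + 1) / c)"
  have big: "W 0 < W y" if y: "y \<in> S" "norm y > s0" for y
  proof -
    define s where "s = norm y"
    have s1: "s \<ge> 1" "s > (\<bar>A\<bar> + 1) / c" using y unfolding s0_def s_def by auto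
    then have "c * s > \<bar>A\<bar> + 1" using c by (simp add: field_simps)
    then have "c * s + A > 0" by linarith
    then have "s * (c * s + A) > 0" using s1 by simp
    then have "c * s * (s - 1) + s * m1 - (s - 1) * p0 > p0" unfolding A_def by (simp add: algebra_simps)
    then have "ereal p0 < ereal (c * s * (s - 1) + s * m1 - (s - 1) * p0)" by simp
    also have "\<dots> \<le> W y" using growth[OF y(1)] s1 unfolding s_def by simp
    finally show ?thesis using W0 p0 by simp
  qed
  obtain ys where ys: "ys \<in> S \<inter> cball 0 s0" "\<And>z. z \<in> S \<inter> cball 0 s0 \<Longrightarrow> W ys \<le> W z"
  proof -
    have "s0 \<ge> 0" unfolding s0_def by simp
    from minK[OF this] show ?thesis using that by blast
  qed
  have "W ys \<le> W z" if "z \<in> S" for z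
  proof (cases "norm z \<le> s0")
    case True then show ?thesis using ys(2) that by simp
  next
    case False
    then have "W 0 < W z" using big that by simp
    moreover have "W ys \<le> W 0" using ys(2)[of 0] S0 unfolding s0_def by simp
    ultimately show ?thesis by simp
  qed
  then show ?thesis using ys(1) by blast
qed

lemma qf_zero: "qf m B (\<lambda>_. 0) = 0" by (simp add: qf_def)

lemma qf_nonneg: "pos_def_mat m B \<Longrightarrow> t \<in> bvec m \<Longrightarrow> 0 \<le> qf m B t"
  unfolding pos_def_mat_def by (cases "t = (\<lambda>_. 0)") (auto simp: qf_zero intro: less_imp_le)

lemma bnorm_sq: "pos_def_mat m B \<Longrightarrow> t \<in> bvec m \<Longrightarrow> (bnorm m B t)^2 = qf m B t"
  by (simp add: bnorm_def qf_nonneg)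

lemma qf_scale: "qf m B (\<lambda>j. a * t j) = a^2 * qf m B t"
  by (simp add: qf_def sum_distrib_left power2_eq_square mult_ac)

lemma qf_mid: "qf m B (\<lambda>j. (a j + b j) / 2) = (qf m B a + qf m B b) / 2 - qf m B (\<lambda>j. a j - b j) / 4"
proof -
  have "qf m B (\<lambda>j. (a j + b j) / 2) = (\<Sum>j<m. \<Sum>k<m. (B j k * a k * a j + B j k * b k * b j) / 2 - B j k * (a k - b k) * (a j - b j) / 4)"
    unfolding qf_def by (intro sum.cong refl) (simp add: field_simps)
  also have "\<dots> = (qf m B a + qf m B b) / 2 - qf m B (\<lambda>j. a j - b j) / 4"
    unfolding qf_def by (simp add: sum_subtractf sum_divide_distrib[symmetric] sum.distrib)
  finally show ?thesis .
qed

lemma bvec_add: "t \<in> bvec m \<Longrightarrow> s \<in> bvec m \<Longrightarrow> (\<lambda>j. t j + s j) \<in> bvec m"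
  by (simp add: bvec_def)
lemma bvec_comb: "t \<in> bvec m \<Longrightarrow> s \<in> bvec m \<Longrightarrow> (\<lambda>j. a * t j + b * s j) \<in> bvec m"
  by (simp add: bvec_def)

lemma grad_works:
  fixes f :: "real^'n \<Rightarrow> real"
  assumes "f differentiable (at y)"
  shows "(f has_derivative (\<lambda>h. grad f y \<bullet> h)) (at y)"
proof -
  obtain D where D: "(f has_derivative D) (at y)" using assms by (auto simp: differentiable_def)
  have lin: "linear D" using has_derivative_linear[OF D] .
  have "D = (\<lambda>h. adjoint D 1 \<bullet> h)"
  proof
    fix h
    have "h \<bullet> adjoint D 1 = D h \<bullet> 1" by (rule adjoint_works[OF lin])
    then show "D h = adjoint D 1 \<bullet> h" by (simp add: inner_commute)
  qed
  with D have "\<exists>g. (f has_derivative (\<lambda>h. g \<bullet> h)) (at y)" by metis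
  then show ?thesis unfolding grad_def by (rule someI_ex)
qed

lemma grad_ineq:
  fixes f :: "real^'n \<Rightarrow> real"
  assumes cvx: "convex_on UNIV f" and diff: "\<And>y. f differentiable (at y)"
  shows "f x + grad f x \<bullet> z \<le> f (x + z)"
proof -
  define h where "h = (\<lambda>t::real. f (x + t *\<^sub>R z))"
  have hc: "convex_on UNIV h"
  proof (rule convex_onI)
    fix t a b :: real assume "0 < t" "t < 1"
    have "x + ((1 - t) *\<^sub>R a + t *\<^sub>R b) *\<^sub>R z = (1 - t) *\<^sub>R (x + a *\<^sub>R z) + t *\<^sub>R (x + b *\<^sub>R z)"
      by (simp add: algebra_simps)
    then show "h ((1 - t) *\<^sub>R a + t *\<^sub>R b) \<le> (1 - t) * h a + t * h b"
      unfolding h_def using convex_onD[OF cvx, of t] \<open>0 < t\<close> \<open>t < 1\<close> by simp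
  qed simp
  have d1: "((\<lambda>t::real. x + t *\<^sub>R z) has_derivative (\<lambda>t. t *\<^sub>R z)) (at 0)"
    by (auto intro!: derivative_eq_intros)
  have d2: "(f has_derivative (\<lambda>v. grad f x \<bullet> v)) (at (x + 0 *\<^sub>R z))"
    using grad_works[OF diff[of x]] by simp
  have "(h has_derivative (\<lambda>t. grad f x \<bullet> (t *\<^sub>R z))) (at 0)"
    unfolding h_def using has_derivative_compose[OF d1 d2] by (simp add: comp_def)
  then have "(h has_real_derivative (grad f x \<bullet> z)) (at 0)"
    unfolding has_field_derivative_def by (simp add: mult.commute[of _ "grad f x \<bullet> z"])
  then have "h 1 - h 0 \<ge> (grad f x \<bullet> z) * (1 - 0)"
    using convex_on_imp_above_tangent[OF hc, of 0 1] by simp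
  then show ?thesis unfolding h_def by simp
qed

locale blocks =
  fixes n :: nat and N :: "nat \<Rightarrow> nat" and U :: "real^'n^'n" and e :: "nat \<times> nat \<Rightarrow> 'n"
    and \<sigma> :: "'n \<Rightarrow> 'n"
  assumes bs: "bij \<sigma>" and Ud: "U = (\<chi> k l. if k = \<sigma> l then 1 else 0)"
    and part: "bij_betw e {(i, j). i < n \<and> j < N i} UNIV"
begin

lemma blk_eq: "blk U e N i x = (\<lambda>j. if j < N i then x $ \<sigma> (e (i, j)) else 0)"
proof -
  have "(\<Sum>j\<in>UNIV. (if j = a then 1 else 0) * x $ j) = x $ a" for a
  proof -
    have "(\<Sum>j\<in>UNIV. (if j = a then 1 else 0) * x $ j) = (\<Sum>j\<in>UNIV. if j = a then x $ j else 0)"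
      by (rule sum.cong) auto
    then show ?thesis by simp
  qed
  then have "(transpose U *v x) $ l = x $ \<sigma> l" for l
    by (simp add: Ud matrix_vector_mult_def transpose_def)
  then show ?thesis unfolding blk_def by auto
qed

lemma emb_eq: "emb U e N i t $ k = (\<Sum>j<N i. if k = \<sigma> (e (i, j)) then t j else 0)"
  unfolding emb_def Ud by (auto intro: sum.cong)


lemma phi_inj:
  assumes "i < n" "j < N i" "i' < n" "j' < N i'" "\<sigma> (e (i, j)) = \<sigma> (e (i', j'))"
  shows "i = i' \<and> j = j'"
proof -
  have "e (i, j) = e (i', j')" using assms(5) bs by (meson bij_is_inj injD)
  then show ?thesis using part assms unfolding bij_betw_def inj_on_def by blast
qed

lemma blk_emb:
  assumes "i < n" "i' < n" "t \<in> bvec (N i)"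
  shows "blk U e N i' (emb U e N i t) = (if i' = i then t else (\<lambda>_. 0))"
proof (rule ext)
  fix j
  show "blk U e N i' (emb U e N i t) j = (if i' = i then t else (\<lambda>_. 0)) j"
  proof (cases "j < N i'")
    case True
    have "emb U e N i t $ \<sigma> (e (i', j)) = (\<Sum>j'<N i. if i' = i \<and> j' = j then t j' else 0)"
      unfolding emb_eq using phi_inj[of i' j i] assms True by (intro sum.cong) auto
    also have "\<dots> = (if i' = i then t j else 0)"
      using True by (cases "i' = i") auto
    finally show ?thesis using True by (simp add: blk_eq)
  next
    case False
    then show ?thesis using assms(3) by (auto simp: blk_eq bvec_def)
  qed
qed

lemma blk_bvec: "blk U e N i y \<in> bvec (N i)"
  by (simp add: blk_eq bvec_def)

lemma blk_add: "blk U e N i (x + y) = (\<lambda>j. blk U e N i x j + blk U e N i y j)"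
  by (auto simp: blk_eq)
lemma blk_diff: "blk U e N i (x - y) = (\<lambda>j. blk U e N i x j - blk U e N i y j)"
  by (auto simp: blk_eq)
lemma blk_scale: "blk U e N i (c *\<^sub>R y) = (\<lambda>j. c * blk U e N i y j)"
  by (auto simp: blk_eq)
lemma blk_zero: "blk U e N i 0 = (\<lambda>_. 0)"
  by (auto simp: blk_eq)
lemma blk_sum: "finite A \<Longrightarrow> blk U e N i (sum h A) = (\<lambda>j. \<Sum>a\<in>A. blk U e N i (h a) j)"
  by (auto simp: blk_eq sum_component)

lemma inner_blk:
  "g \<bullet> y = (\<Sum>i<n. \<Sum>j<N i. blk U e N i g j * blk U e N i y j)"
proof -
  have bij: "bij_betw (\<lambda>p. \<sigma> (e p)) {(i, j). i < n \<and> j < N i} UNIV"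
    using bij_betw_trans[OF part bs] by (simp add: comp_def)
  have "g \<bullet> y = (\<Sum>k\<in>UNIV. g $ k * y $ k)" by (simp add: inner_vec_def)
  also have "\<dots> = (\<Sum>p\<in>{(i, j). i < n \<and> j < N i}. g $ \<sigma> (e p) * y $ \<sigma> (e p))"
    using sum.reindex_bij_betw[OF bij, of "\<lambda>k. g $ k * y $ k"] by simp
  also have "{(i, j). i < n \<and> j < N i} = Sigma {..<n} (\<lambda>i. {..<N i})" by auto
  also have "(\<Sum>p\<in>Sigma {..<n} (\<lambda>i. {..<N i}). g $ \<sigma> (e p) * y $ \<sigma> (e p))
      = (\<Sum>i<n. \<Sum>j<N i. g $ \<sigma> (e (i, j)) * y $ \<sigma> (e (i, j)))"
    by (subst sum.Sigma) auto
  also have "\<dots> = (\<Sum>i<n. \<Sum>j<N i. blk U e N i g j * blk U e N i y j)"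
    by (intro sum.cong) (auto simp: blk_eq)
  finally show ?thesis .
qed


lemma contE: "continuous_on UNIV (\<lambda>y. blk U e N i y j)"
  by (cases "j < N i") (simp_all add: blk_eq continuous_on_component continuous_on_id)

lemma emb_in_S:
  "emb U e N i t \<in> {y. \<forall>k. (\<forall>j<N i. k \<noteq> \<sigma> (e (i, j))) \<longrightarrow> y $ k = 0}"
  by (auto simp: emb_eq intro!: sum.neutral)

lemma S_blk_zero:
  assumes "\<forall>k. (\<forall>j<N i. k \<noteq> \<sigma> (e (i, j))) \<longrightarrow> y $ k = 0" "blk U e N i y = (\<lambda>_. 0)"
  shows "y = 0"
proof (rule vec_eq_iff[THEN iffD2], rule allI)
  fix k
  show "y $ k = 0 $ k"
  proof (cases "\<exists>j<N i. k = \<sigma> (e (i, j))")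
    case True
    then obtain j where "j < N i" "k = \<sigma> (e (i, j))" by auto
    then show ?thesis using fun_cong[OF assms(2), of j] by (simp add: blk_eq)
  next
    case False then show ?thesis using assms(1) by auto
  qed
qed

lemma Tblk_ok:
  fixes g x0 :: "nat \<Rightarrow> real" and P :: "(nat \<Rightarrow> real) \<Rightarrow> ereal" and Li :: real
  assumes i: "i < n" and Bi: "pos_def_mat (N i) Bm" and Li: "Li > 0"
    and Pi: "proper_closed_convex (N i) P" and x0: "x0 \<in> bvec (N i)" and Px0: "P x0 < \<infinity>"
  defines "V \<equiv> \<lambda>t. ereal ((\<Sum>j<N i. g j * t j) + Li / 2 * (bnorm (N i) Bm t)\<^sup>2) + P (\<lambda>j. x0 j + t j)"
  shows "\<exists>!t. t \<in> bvec (N i) \<and> (\<forall>s\<in>bvec (N i). V t \<le> V s)"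
proof -
  define m where "m = N i"
  define E where "E = (\<lambda>y. blk U e N i y)"
  define S where "S = {y::real^'n. \<forall>k. (\<forall>j<N i. k \<noteq> \<sigma> (e (i, j))) \<longrightarrow> y $ k = 0}"
  define l where "l = (\<lambda>y. \<Sum>j<m. g j * E y j)"
  define Q where "Q = (\<lambda>y. Li / 2 * qf m Bm (E y))"
  define P' where "P' = (\<lambda>y. P (\<lambda>j. x0 j + E y j))"
  define W where "W = (\<lambda>y. V (E y))"
  have Ebv: "E y \<in> bvec m" for y unfolding E_def m_def by (rule blk_bvec)
  have x0E: "(\<lambda>j. x0 j + E y j) \<in> bvec m" for y using bvec_add[OF x0[folded m_def] Ebv] .
  have Pfin_all: "t \<in> bvec m \<Longrightarrow> P t > -\<infinity>" for t using Pi unfolding proper_closed_convex_def m_def by auto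
  have Pconv_all: "t \<in> bvec m \<Longrightarrow> s \<in> bvec m \<Longrightarrow> 0 \<le> a \<Longrightarrow> a \<le> 1 \<Longrightarrow>
      P (\<lambda>j. a * t j + (1 - a) * s j) \<le> ereal a * P t + ereal (1 - a) * P s" for t s a
    using Pi unfolding proper_closed_convex_def m_def by blast
  have Epi: "closed {(t, r::real). t \<in> bvec m \<and> P t \<le> ereal r}"
    using Pi unfolding proper_closed_convex_def m_def by blast
  have VE: "V t = ereal ((\<Sum>j<m. g j * t j) + Li / 2 * qf m Bm t) + P (\<lambda>j. x0 j + t j)" if "t \<in> bvec m" for t
    unfolding V_def m_def using bnorm_sq[OF Bi, of t] that m_def by simp
  have contEj: "continuous_on UNIV (\<lambda>y. E y j)" for j unfolding E_def by (rule contE)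
  have contl: "continuous_on UNIV l" unfolding l_def by (intro continuous_intros contEj)
  have contQ: "continuous_on UNIV Q" unfolding Q_def qf_def by (intro continuous_intros contEj)
  have E_emb: "t \<in> bvec m \<Longrightarrow> E (emb U e N i t) = t" for t
    unfolding E_def m_def using blk_emb[OF i i] by simp
  have embS: "emb U e N i t \<in> S" for t unfolding S_def by (rule emb_in_S)
  have W_eq: "W y = ereal (l y + Q y) + P' y" for y
    unfolding W_def l_def Q_def P'_def using VE[OF Ebv] by simp
  have E_add: "E (y + z) = (\<lambda>j. E y j + E z j)" for y z unfolding E_def by (rule blk_add)
  have E_scale: "E (a *\<^sub>R y) = (\<lambda>j. a * E y j)" for a y unfolding E_def by (rule blk_scale)
  have E_zero: "E 0 = (\<lambda>_. 0)" unfolding E_def by (rule blk_zero)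
  have subS: "subspace S" unfolding subspace_def S_def by auto
  have closedS: "closed S"
  proof -
    have "S = (\<Inter>k\<in>{k. \<forall>j<N i. k \<noteq> \<sigma> (e (i, j))}. {y. y $ k = 0})" unfolding S_def by auto
    moreover have "closed {y::real^'n. y $ k = 0}" for k
      by (intro closed_Collect_eq continuous_on_component continuous_on_id continuous_on_const)
    ultimately show ?thesis by auto
  qed
  have lin: "linear l"
    by (rule linearI) (simp_all add: l_def E_add E_scale algebra_simps sum.distrib sum_distrib_left)
  have Qhom: "Q (a *\<^sub>R y) = a^2 * Q y" for a y unfolding Q_def E_scale qf_scale by simp
  have Q0: "Q 0 = 0" using Qhom[of 0 0] by simp
  have Qpos: "Q y > 0" if "y \<in> S" "y \<noteq> 0" for y
  proof -
    have "E y \<noteq> (\<lambda>_. 0)" using S_blk_zero[where y=y and i=i] that unfolding S_def E_def by auto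
    then have "qf m Bm (E y) > 0" using Bi Ebv unfolding pos_def_mat_def m_def by auto
    then show ?thesis unfolding Q_def using Li by simp
  qed
  obtain c where c: "c > 0" "\<And>y. y \<in> S \<Longrightarrow> c * (norm y)^2 \<le> Q y"
  proof (cases "S \<inter> sphere 0 1 = {}")
    case True
    have "y = 0" if "y \<in> S" for y
    proof (rule ccontr)
      assume "y \<noteq> 0"
      then have "(1 / norm y) *\<^sub>R y \<in> S \<inter> sphere 0 1" using that subS by (simp add: subspace_scale)
      then show False using True by auto
    qed
    then show ?thesis using that[of 1] Q0 by force
  next
    case False
    have "compact (S \<inter> sphere 0 1)" using closedS by (simp add: closed_Int_compact)
    then obtain y1 where y1: "y1 \<in> S \<inter> sphere 0 1" "\<And>z. z \<in> S \<inter> sphere 0 1 \<Longrightarrow> Q y1 \<le> Q z"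
      using continuous_attains_inf[of "S \<inter> sphere 0 1" Q] False continuous_on_subset[OF contQ] by blast
    have c0: "Q y1 > 0" using Qpos[of y1] y1(1) by (metis IntD1 IntD2 mem_sphere_0 norm_zero zero_neq_one)
    have "Q y1 * (norm y)^2 \<le> Q y" if "y \<in> S" for y
    proof (cases "y = 0")
      case True then show ?thesis using Q0 by simp
    next
      case False
      define u where "u = (1 / norm y) *\<^sub>R y"
      have "u \<in> S \<inter> sphere 0 1" unfolding u_def using that subS False by (simp add: subspace_scale)
      then have "Q y1 \<le> Q u" by (rule y1(2))
      also have "Q u = Q y / (norm y)^2" unfolding u_def Qhom by (simp add: power_divide)
      finally show ?thesis using False by (simp add: field_simps)
    qed
    then show ?thesis using that[of "Q y1"] c0 by (simp add: mult.commute)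
  qed
  have Pfin: "y \<in> S \<Longrightarrow> P' y > -\<infinity>" for y unfolding P'_def by (rule Pfin_all[OF x0E])
  have P'0: "P' 0 = P x0" unfolding P'_def E_zero by simp
  have Pconv: "P' (a *\<^sub>R y) \<le> ereal a * P' y + ereal (1 - a) * P' 0" if "y \<in> S" "0 \<le> a" "a \<le> 1" for y a
  proof -
    have "(\<lambda>j. x0 j + E (a *\<^sub>R y) j) = (\<lambda>j. a * (x0 j + E y j) + (1 - a) * x0 j)"
      unfolding E_scale by (auto simp: algebra_simps)
    then show ?thesis unfolding P'_def P'0[unfolded P'_def]
      using Pconv_all[OF x0E x0[folded m_def] that(2,3), of y] by (simp add: E_zero)
  qed
  have cl: "closed {y \<in> S. W y \<le> ereal r}" for r
  proof -
    have eq: "{y \<in> S. W y \<le> ereal r} = S \<inter> (\<lambda>y. ((\<lambda>j. x0 j + E y j), r - l y - Q y)) -` {(t, r::real). t \<in> bvec m \<and> P t \<le> ereal r}"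
    proof -
      have "W y \<le> ereal r \<longleftrightarrow> P' y \<le> ereal (r - l y - Q y)" for y
        unfolding W_eq by (cases "P' y") auto
      then show ?thesis using x0E unfolding P'_def by auto
    qed
    have "continuous_on UNIV (\<lambda>y. ((\<lambda>j. x0 j + E y j), r - l y - Q y))"
      by (intro continuous_intros continuous_on_coordinatewise_then_product contEj contl contQ)
    then have "closed ((\<lambda>y. ((\<lambda>j. x0 j + E y j), r - l y - Q y)) -` {(t, r::real). t \<in> bvec m \<and> P t \<le> ereal r})" by (rule closed_vimage[OF Epi])
    then show ?thesis unfolding eq using closedS by (rule closed_Int[rotated])
  qed
  obtain ys where ys: "ys \<in> S" "\<And>z. z \<in> S \<Longrightarrow> W ys \<le> W z"
  proof -
    have "\<exists>y\<in>S. \<forall>z\<in>S. W y \<le> W z"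
      by (rule gen_min[where W=W and P=P' and l=l and Q=Q and S=S and c=c])
        (use subS closedS lin Qhom c Pfin P'0 Px0 Pconv W_eq cl in auto)
    then show ?thesis using that by blast
  qed
  have ex: "E ys \<in> bvec m \<and> (\<forall>s\<in>bvec m. V (E ys) \<le> V s)"
  proof (intro conjI ballI Ebv)
    fix s assume s: "s \<in> bvec m"
    have "W ys \<le> W (emb U e N i s)" using ys(2) embS by blast
    then show "V (E ys) \<le> V s" unfolding W_def E_emb[OF s] .
  qed
  have uniq: "t1 = t2" if t1: "t1 \<in> bvec m" "\<forall>s\<in>bvec m. V t1 \<le> V s"
    and t2: "t2 \<in> bvec m" "\<forall>s\<in>bvec m. V t2 \<le> V s" for t1 t2
  proof (rule ccontr)
    assume ne: "t1 \<noteq> t2"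
    define h where "h = (\<lambda>t. (\<Sum>j<m. g j * t j) + Li / 2 * qf m Bm t)"
    have z: "(\<lambda>_. 0::real) \<in> bvec m" by (simp add: bvec_def)
    have V0: "V (\<lambda>_. 0) = P x0" using VE[OF z] by (simp add: qf_zero zero_ereal_def)
    have fin: "\<exists>p. P (\<lambda>j. x0 j + t j) = ereal p" if "t \<in> bvec m" "\<forall>s\<in>bvec m. V t \<le> V s" for t
    proof -
      have "V t < \<infinity>" using that(2) z V0 Px0 by (metis order.strict_trans1)
      moreover have "P (\<lambda>j. x0 j + t j) > -\<infinity>" using Pfin_all[OF bvec_add[OF x0[folded m_def] that(1)]] .
      ultimately show ?thesis using VE[OF that(1)] by (cases "P (\<lambda>j. x0 j + t j)") auto
    qed
    obtain p1 where p1: "P (\<lambda>j. x0 j + t1 j) = ereal p1" using fin t1 by blast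
    obtain p2 where p2: "P (\<lambda>j. x0 j + t2 j) = ereal p2" using fin t2 by blast
    have V1: "V t1 = ereal (h t1 + p1)" using VE[OF t1(1)] p1 h_def by simp
    have V2: "V t2 = ereal (h t2 + p2)" using VE[OF t2(1)] p2 h_def by simp
    have eq12: "h t1 + p1 = h t2 + p2" using t1 t2 V1 V2 by (metis antisym ereal_less_eq(3))
    define tm where "tm = (\<lambda>j. (t1 j + t2 j) / 2)"
    have tmb: "tm \<in> bvec m" using t1(1) t2(1) by (simp add: bvec_def tm_def)
    have "(\<lambda>j. x0 j + tm j) = (\<lambda>j. (1/2) * (x0 j + t1 j) + (1 - 1/2) * (x0 j + t2 j))"
      by (auto simp: tm_def field_simps)
    then have Pm: "P (\<lambda>j. x0 j + tm j) \<le> ereal ((p1 + p2) / 2)"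
      using Pconv_all[OF bvec_add[OF x0[folded m_def] t1(1)] bvec_add[OF x0[folded m_def] t2(1)], of "1/2"] p1 p2
      by (simp add: field_simps)
    define d where "d = (\<lambda>j. t1 j - t2 j)"
    have hm: "h tm = (h t1 + h t2) / 2 - Li / 8 * qf m Bm d"
    proof -
      have "(\<Sum>j<m. g j * tm j) = ((\<Sum>j<m. g j * t1 j) + (\<Sum>j<m. g j * t2 j)) / 2"
        by (simp add: tm_def sum_divide_distrib[symmetric] sum.distrib[symmetric] algebra_simps)
      then show ?thesis unfolding h_def tm_def d_def qf_mid by (simp add: algebra_simps)
    qed
    have db: "d \<in> bvec m" using t1(1) t2(1) by (simp add: bvec_def d_def)
    have "d \<noteq> (\<lambda>_. 0)"
    proof
      assume "d = (\<lambda>_. 0)"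
      then have "t1 = t2" by (auto simp: d_def fun_eq_iff)
      then show False using ne by simp
    qed
    then have qd: "qf m Bm d > 0" using Bi db unfolding pos_def_mat_def m_def by auto
    have "V tm = ereal (h tm) + P (\<lambda>j. x0 j + tm j)" using VE[OF tmb] h_def by simp
    also have "\<dots> \<le> ereal (h tm) + ereal ((p1 + p2) / 2)" using Pm by (rule add_left_mono)
    also have "\<dots> = ereal (h tm + (p1 + p2) / 2)" by simp
    also have "h tm + (p1 + p2) / 2 < h t1 + p1" using hm eq12 mult_pos_pos[OF Li qd] by (simp add: field_simps)
    finally have "V tm < V t1" using V1 by simp
    then show False using t1(2) tmb by (simp add: not_le[symmetric])
  qed
  show ?thesis using ex uniq unfolding m_def by blast
qed

lemma Lnorm_sq:
  assumes "\<And>i. i < n \<Longrightarrow> pos_def_mat (N i) (B i)" "\<And>i. i < n \<Longrightarrow> L i > 0"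
  shows "(Lnorm n L B U e N y)^2 = (\<Sum>i<n. L i * qf (N i) (B i) (blk U e N i y))"
proof -
  have "(\<Sum>i<n. L i * (bnorm (N i) (B i) (blk U e N i y))\<^sup>2) = (\<Sum>i<n. L i * qf (N i) (B i) (blk U e N i y))"
    using assms by (intro sum.cong refl) (simp add: bnorm_sq blk_bvec)
  moreover have "0 \<le> (\<Sum>i<n. L i * qf (N i) (B i) (blk U e N i y))"
    using assms by (intro sum_nonneg) (simp add: qf_nonneg blk_bvec less_imp_le)
  ultimately show ?thesis unfolding Lnorm_def by simp
qed

lemma Lnorm_scale:
  assumes "\<And>i. i < n \<Longrightarrow> pos_def_mat (N i) (B i)" "\<And>i. i < n \<Longrightarrow> L i > 0"
  shows "(Lnorm n L B U e N (c *\<^sub>R y))^2 = c^2 * (Lnorm n L B U e N y)^2"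
proof -
  have "(Lnorm n L B U e N (c *\<^sub>R y))^2 = (\<Sum>i<n. L i * qf (N i) (B i) (blk U e N i (c *\<^sub>R y)))"
    by (rule Lnorm_sq[OF assms])
  also have "\<dots> = c^2 * (\<Sum>i<n. L i * qf (N i) (B i) (blk U e N i y))"
    unfolding blk_scale qf_scale by (simp add: sum_distrib_left algebra_simps)
  also have "\<dots> = c^2 * (Lnorm n L B U e N y)^2" using Lnorm_sq[OF assms] by simp
  finally show ?thesis .
qed

lemma H_split:
  assumes "\<And>i. i < n \<Longrightarrow> pos_def_mat (N i) (B i)" "\<And>i. i < n \<Longrightarrow> L i > 0"
  shows "Hfun n f Ps L B U e N x z = ereal (f x) + (\<Sum>i<n. Vfun f Ps L B U e N i x (blk U e N i z))"
proof -
  define g where "g = grad f x"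
  define a where "a = (\<lambda>i. (\<Sum>j<N i. blk U e N i g j * blk U e N i z j) + L i / 2 * (bnorm (N i) (B i) (blk U e N i z))\<^sup>2)"
  have "(Lnorm n L B U e N z)^2 = (\<Sum>i<n. L i * qf (N i) (B i) (blk U e N i z))"
    by (rule Lnorm_sq[OF assms])
  also have "\<dots> = (\<Sum>i<n. L i * (bnorm (N i) (B i) (blk U e N i z))\<^sup>2)"
    using assms by (intro sum.cong refl) (simp add: bnorm_sq blk_bvec)
  finally have r: "g \<bullet> z + 1/2 * (Lnorm n L B U e N z)^2 = (\<Sum>i<n. a i)"
    unfolding inner_blk[of g z] a_def by (simp add: sum.distrib sum_distrib_left)
  have "Hfun n f Ps L B U e N x z = ereal (f x + (\<Sum>i<n. a i)) + (\<Sum>i<n. Ps i (\<lambda>j. blk U e N i x j + blk U e N i z j))"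
    unfolding Hfun_def Psi_def blk_add g_def[symmetric] using r by (simp add: add.assoc)
  also have "\<dots> = ereal (f x) + ((\<Sum>i<n. ereal (a i)) + (\<Sum>i<n. Ps i (\<lambda>j. blk U e N i x j + blk U e N i z j)))"
  proof -
    have e: "ereal (f x + (\<Sum>i<n. a i)) = ereal (f x) + ereal (\<Sum>i<n. a i)" by simp
    show ?thesis by (simp only: e sum_ereal add.assoc)
  qed
  also have "\<dots> = ereal (f x) + (\<Sum>i<n. Vfun f Ps L B U e N i x (blk U e N i z))"
    unfolding Vfun_def a_def g_def by (simp add: sum.distrib)
  finally show ?thesis .
qed

lemma Tmap_blk:
  assumes "\<And>i. i < n \<Longrightarrow> T i \<in> bvec (N i)" "i < n"
  shows "blk U e N i (\<Sum>i'<n. emb U e N i' (T i')) = T i"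
proof -
  have "blk U e N i (\<Sum>i'<n. emb U e N i' (T i')) = (\<lambda>j. \<Sum>i'<n. blk U e N i (emb U e N i' (T i')) j)"
    by (simp add: blk_sum)
  also have "\<dots> = (\<lambda>j. \<Sum>i'<n. if i' = i then T i j else 0)"
    using blk_emb[OF _ assms(2) assms(1)] by (intro ext sum.cong refl) auto
  also have "\<dots> = T i" using assms(2) by simp
  finally show ?thesis .
qed

end

theorem lemma3:
  fixes n :: nat and N :: "nat \<Rightarrow> nat"
    and U :: "real^'n^'n" and e :: "nat \<times> nat \<Rightarrow> 'n"
    and B :: "nat \<Rightarrow> nat \<Rightarrow> nat \<Rightarrow> real" and L :: "nat \<Rightarrow> real"
    and f :: "real^'n \<Rightarrow> real" and Ps :: "nat \<Rightarrow> (nat \<Rightarrow> real) \<Rightarrow> ereal"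
    and x xstar :: "real^'n"
  assumes U: "col_perm U"
    and part: "bij_betw e {(i, j). i < n \<and> j < N i} UNIV"
    and B: "\<And>i. i < n \<Longrightarrow> pos_def_mat (N i) (B i)"
    and f_convex: "convex_on UNIV f"
    and f_diff: "\<And>y. f differentiable (at y)"
    and L_pos: "\<And>i. i < n \<Longrightarrow> L i > 0"
    and lip: "\<And>i y t. i < n \<Longrightarrow> t \<in> bvec (N i) \<Longrightarrow>
       dnorm (N i) (B i) (\<lambda>j. blk U e N i (grad f (y + emb U e N i t)) j - blk U e N i (grad f y) j)
         \<le> L i * bnorm (N i) (B i) t"
    and Psi_i: "\<And>i. i < n \<Longrightarrow> proper_closed_convex (N i) (Ps i)"
    and xstar: "xstar \<in> {z. \<forall>y. Fobj f n Ps U e N z \<le> Fobj f n Ps U e N y}"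
    and x_dom: "Psi n Ps U e N x < \<infinity>"
  shows "let Fs = (INF y. Fobj f n Ps U e N y);
             D = real_of_ereal (Fobj f n Ps U e N x - Fs);
             R = Lnorm n L B U e N (x - xstar);
             Hx = Hfun n f Ps L B U e N x (Tmap n f Ps L B U e N x)
         in (D \<le> R\<^sup>2 \<longrightarrow> Hx - Fs \<le> ereal ((1 - D / (2 * R\<^sup>2)) * D)) \<and>
            (\<not> D \<le> R\<^sup>2 \<longrightarrow> Hx - Fs \<le> ereal (R\<^sup>2 / 2) \<and> R\<^sup>2 / 2 < D / 2)"
proof -
  obtain \<sigma> where \<sigma>: "bij \<sigma>" "U = (\<chi> k l. if k = \<sigma> l then 1 else 0)"
    using U unfolding col_perm_def by blast
  interpret bl: blocks n N U e \<sigma> using \<sigma> part by unfold_locales auto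
  define F where "F = Fobj f n Ps U e N"
  define Fs where "Fs = (INF y. F y)"
  have FsF: "Fs = F xstar" using xstar unfolding Fs_def F_def by (auto intro: antisym INF_lower INF_greatest)
  have Pfin: "Ps i (blk U e N i y) > -\<infinity>" if "i < n" for i y
    using Psi_i[OF that] bl.blk_bvec unfolding proper_closed_convex_def by blast
  have Pconv: "Ps i (\<lambda>j. a * t j + (1 - a) * s j) \<le> ereal a * Ps i t + ereal (1 - a) * Ps i s"
    if "i < n" "t \<in> bvec (N i)" "s \<in> bvec (N i)" "0 \<le> a" "a \<le> 1" for i t s a
    using Psi_i[OF that(1)] that(2-) unfolding proper_closed_convex_def by blast
  have fin_terms: "Ps i (blk U e N i y) < \<infinity>" if "Psi n Ps U e N y < \<infinity>" "i < n" for i y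
  proof (rule ccontr)
    assume "\<not> Ps i (blk U e N i y) < \<infinity>"
    then have "Ps i (blk U e N i y) = \<infinity>" by (simp add: not_less top_unique)
    then have "Psi n Ps U e N y = \<infinity>" unfolding Psi_def using that(2) by (subst sum_Pinfty) auto
    then show False using that(1) by simp
  qed
  have Fx_fin: "F x < \<infinity>" unfolding F_def Fobj_def using x_dom by simp
  have "F xstar \<le> F x" using xstar unfolding F_def by simp
  then have "F xstar < \<infinity>" using Fx_fin using order.strict_trans1 by blast
  then have xs_dom: "Psi n Ps U e N xstar < \<infinity>" unfolding F_def Fobj_def by simp
  define px where "px = (\<lambda>i. real_of_ereal (Ps i (blk U e N i x)))"
  define ps where "ps = (\<lambda>i. real_of_ereal (Ps i (blk U e N i xstar)))"
  have px: "Ps i (blk U e N i x) = ereal (px i)" if "i < n" for i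
    using fin_terms[OF x_dom that] Pfin[OF that, of x] unfolding px_def by (cases "Ps i (blk U e N i x)") auto
  have ps: "Ps i (blk U e N i xstar) = ereal (ps i)" if "i < n" for i
    using fin_terms[OF xs_dom that] Pfin[OF that, of xstar] unfolding ps_def by (cases "Ps i (blk U e N i xstar)") auto
  have Psix: "Psi n Ps U e N x = ereal (\<Sum>i<n. px i)"
    unfolding Psi_def sum_ereal[symmetric] using px by (intro sum.cong) auto
  have Psixs: "Psi n Ps U e N xstar = ereal (\<Sum>i<n. ps i)"
    unfolding Psi_def sum_ereal[symmetric] using ps by (intro sum.cong) auto
  define Fsr where "Fsr = f xstar + (\<Sum>i<n. ps i)"
  define Fxr where "Fxr = f x + (\<Sum>i<n. px i)"
  have Fs_eq: "Fs = ereal Fsr" unfolding FsF F_def Fobj_def Psixs Fsr_def by simp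
  have Fx_eq: "F x = ereal Fxr" unfolding F_def Fobj_def Psix Fxr_def by simp
  define D where "D = Fxr - Fsr"
  have D_eq: "real_of_ereal (Fobj f n Ps U e N x - Fs) = D"
    using Fx_eq Fs_eq unfolding F_def D_def by simp
  have "ereal Fsr \<le> ereal Fxr" using \<open>F xstar \<le> F x\<close> FsF Fs_eq Fx_eq by simp
  then have D0: "D \<ge> 0" unfolding D_def by simp
  define R where "R = Lnorm n L B U e N (x - xstar)"
  define T where "T = (\<lambda>i. Tblk f Ps L B U e N i x)"
  have Topt: "T i \<in> bvec (N i) \<and> (\<forall>s\<in>bvec (N i). Vfun f Ps L B U e N i x (T i) \<le> Vfun f Ps L B U e N i x s)"
    if i: "i < n" for i
  proof -
    have "\<exists>!t. t \<in> bvec (N i) \<and> (\<forall>s\<in>bvec (N i). Vfun f Ps L B U e N i x t \<le> Vfun f Ps L B U e N i x s)"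
      using bl.Tblk_ok[OF i B[OF i] L_pos[OF i] Psi_i[OF i] bl.blk_bvec fin_terms[OF x_dom i],
          of "blk U e N i (grad f x)"] unfolding Vfun_def by simp
    then show ?thesis unfolding T_def Tblk_def by (rule theI')
  qed
  define Hx where "Hx = Hfun n f Ps L B U e N x (Tmap n f Ps L B U e N x)"
  have Tm: "Tmap n f Ps L B U e N x = (\<Sum>i'<n. emb U e N i' (T i'))" unfolding Tmap_def T_def by simp
  have Hmin: "Hx \<le> Hfun n f Ps L B U e N x z" for z
  proof -
    have "Hx = ereal (f x) + (\<Sum>i<n. Vfun f Ps L B U e N i x (blk U e N i (Tmap n f Ps L B U e N x)))"
      unfolding Hx_def by (rule bl.H_split[OF B L_pos])
    also have "\<dots> = ereal (f x) + (\<Sum>i<n. Vfun f Ps L B U e N i x (T i))"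
      using bl.Tmap_blk[of T] Topt Tm by (intro arg_cong2[where f="(+)"] sum.cong refl) auto
    also have "\<dots> \<le> ereal (f x) + (\<Sum>i<n. Vfun f Ps L B U e N i x (blk U e N i z))"
      using Topt bl.blk_bvec by (intro add_left_mono sum_mono) auto
    also have "\<dots> = Hfun n f Ps L B U e N x z" by (rule bl.H_split[OF B L_pos, symmetric])
    finally show ?thesis .
  qed
  have bound: "Hx - Fs \<le> ereal ((1 - a) * D + a^2 / 2 * R^2)" if a: "0 \<le> a" "a \<le> 1" for a
  proof -
    define z where "z = a *\<^sub>R (xstar - x)"
    have xz: "x + z = (1 - a) *\<^sub>R x + a *\<^sub>R xstar" unfolding z_def by (simp add: algebra_simps)
    have f1: "f x + grad f x \<bullet> z \<le> f (x + z)" by (rule grad_ineq[OF f_convex f_diff])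
    have f2: "f (x + z) \<le> (1 - a) * f x + a * f xstar" unfolding xz using convex_onD[OF f_convex, of a x xstar] a by simp
    have L2: "(Lnorm n L B U e N z)^2 = a^2 * R^2"
    proof -
      have "z = (- a) *\<^sub>R (x - xstar)" unfolding z_def by (simp add: algebra_simps)
      then show ?thesis unfolding R_def using bl.Lnorm_scale[OF B L_pos, where c="-a" and y="x - xstar"] by simp
    qed
    have Pz: "Psi n Ps U e N (x + z) \<le> ereal ((1 - a) * (\<Sum>i<n. px i) + a * (\<Sum>i<n. ps i))"
    proof -
      have "Psi n Ps U e N (x + z) = (\<Sum>i<n. Ps i (\<lambda>j. a * blk U e N i xstar j + (1 - a) * blk U e N i x j))"
        unfolding Psi_def xz bl.blk_add bl.blk_scale by (intro sum.cong refl) (simp add: algebra_simps)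
      also have "\<dots> \<le> (\<Sum>i<n. ereal (a * ps i + (1 - a) * px i))"
      proof (rule sum_mono)
        fix i assume "i \<in> {..<n}" then have i: "i < n" by simp
        have "Ps i (\<lambda>j. a * blk U e N i xstar j + (1 - a) * blk U e N i x j)
            \<le> ereal a * Ps i (blk U e N i xstar) + ereal (1 - a) * Ps i (blk U e N i x)"
          using Pconv[OF i bl.blk_bvec bl.blk_bvec a] .
        then show "Ps i (\<lambda>j. a * blk U e N i xstar j + (1 - a) * blk U e N i x j) \<le> ereal (a * ps i + (1 - a) * px i)"
          using px[OF i] ps[OF i] by simp
      qed
      also have "\<dots> = ereal ((1 - a) * (\<Sum>i<n. px i) + a * (\<Sum>i<n. ps i))"
        by (simp add: sum_ereal sum.distrib sum_distrib_left sum_subtractf algebra_simps)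
      finally show ?thesis .
    qed
    have "Hx \<le> Hfun n f Ps L B U e N x z" by (rule Hmin)
    also have "\<dots> = ereal (f x + grad f x \<bullet> z + 1/2 * (Lnorm n L B U e N z)^2) + Psi n Ps U e N (x + z)"
      unfolding Hfun_def ..
    also have "\<dots> \<le> ereal ((1 - a) * f x + a * f xstar + 1/2 * (a^2 * R^2)) + ereal ((1 - a) * (\<Sum>i<n. px i) + a * (\<Sum>i<n. ps i))"
      using f1 f2 L2 Pz by (intro add_mono) auto
    also have "\<dots> = ereal (Fsr + ((1 - a) * D + a^2 / 2 * R^2))"
      unfolding D_def Fsr_def Fxr_def by (simp add: algebra_simps)
    finally have "Hx \<le> ereal (Fsr + ((1 - a) * D + a^2 / 2 * R^2))" .
    then show ?thesis unfolding Fs_eq by (cases Hx) auto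
  qed
  have case1: "Hx - Fs \<le> ereal ((1 - D / (2 * R\<^sup>2)) * D)" if "D \<le> R\<^sup>2"
  proof (cases "R\<^sup>2 = 0")
    case True
    then have "D = 0" using that D0 by simp
    then show ?thesis using bound[of 0] True by simp
  next
    case False
    then have R2: "R\<^sup>2 > 0" by (simp add: less_le)
    have "(1 - D / R\<^sup>2) * D + (D / R\<^sup>2)^2 / 2 * R^2 = (1 - D / (2 * R\<^sup>2)) * D"
      using R2 by (simp add: field_simps power2_eq_square)
    then show ?thesis using bound[of "D / R\<^sup>2"] that D0 R2 by simp
  qed
  have case2: "Hx - Fs \<le> ereal (R\<^sup>2 / 2) \<and> R\<^sup>2 / 2 < D / 2" if "\<not> D \<le> R\<^sup>2"
    using bound[of 1] that by simp
  show ?thesis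
  proof -
    have "real_of_ereal (F x - Fs) = D" using D_eq unfolding F_def .
    then show ?thesis
      unfolding Let_def F_def[symmetric] Fs_def[symmetric] R_def[symmetric] Hx_def[symmetric]
      using case1 case2 by simp
  qed
qed

end
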